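(* Let $(E,P,\vartheta)$ be a complete bipolar metric space and let $F\colon E\cup P\to E\cup P$ with $F(E)\subseteq E$, $F(P)\subseteq P$ be a polynomial contraction, i.e. there exist $\pi\in(0,1)$, an integer $\sigma\geq1$ and functions $q_\upsilon\colon E\times P\to[0,\infty)$, $\upsilon=0,\dots,\sigma$, such that $$\sum_{\upsilon=0}^{\sigma} q_\upsilon(Fe,Ff)\,\vartheta^\upsilon(Fe,Ff)\leq \pi\sum_{\upsilon=0}^{\sigma} q_\upsilon(e,f)\,\vartheta^\upsilon(e,f)\quad\text{for all } e\in E,\ f\in P.$$ Assume (i) $q_0\equiv 0$; (ii) for every $\upsilon\in\{1,\dots,\sigma\}$ there is $W_\upsilon>0$ with $q_\upsilon(e,f)\leq W_\upsilon$ for all $e\in E$, $f\in P$; (iii) there exist $\varrho\in\{1,\dots,\sigma\}$ and $Q_\varrho>0$ with $q_\varrho(e,f)\geq Q_\varrho$ for all $e\in E$, $f\in P$. Then $F$ has a unique fixed point.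
   Context: A bipolar metric space is a triple $(E,P,\vartheta)$ where $E,P$ are nonempty sets and $\vartheta\colon E\times P\to[0,\infty)$ satisfies: (1) for $e\in E$, $f\in P$, $\vartheta(e,f)=0$ iff $e=f$; (2) $\vartheta(e,f)=\vartheta(f,e)$ whenever $e,f\in E\cap P$; (3) $\vartheta(e,f)\leq\vartheta(e,z)+\vartheta(r,z)+\vartheta(r,f)$ for all $e,r\in E$, $z,f\in P$. A sequence $(x_n)$ in $E$ converges to $y\in P$ if $\vartheta(x_n,y)\to0$; a sequence $(y_n)$ in $P$ converges to $x\in E$ if $\vartheta(x,y_n)\to0$. A bisequence $(x_n,y_n)$ with $x_n\in E$, $y_n\in P$ is Cauchy if for every $\varepsilon>0$ there is $N$ with $\vartheta(x_n,y_m)<\varepsilon$ for all $n,m\geq N$; the space is complete if every Cauchy bisequence is convergent (both component sequences converge). $\vartheta^\upsilon$ denotes the $\upsilon$-th power of $\vartheta$, with $\vartheta^0\equiv1$. A fixed point of $F$ is a point $g$ with $Fg=g$. *)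

theory Defs
  imports Complex_Main
begin

text \<open>Bipolar metric space (E,P,d): E, P nonempty subsets of a common ambient type,
  d only meaningful on E x P.\<close>
definition bipolar_metric :: "'a set \<Rightarrow> 'a set \<Rightarrow> ('a \<Rightarrow> 'a \<Rightarrow> real) \<Rightarrow> bool" where
  "bipolar_metric E P d \<longleftrightarrow>
     E \<noteq> {} \<and> P \<noteq> {} \<and>
     (\<forall>e\<in>E. \<forall>f\<in>P. d e f \<ge> 0) \<and>
     (\<forall>e\<in>E. \<forall>f\<in>P. d e f = 0 \<longleftrightarrow> e = f) \<and>
     (\<forall>e\<in>E \<inter> P. \<forall>f\<in>E \<inter> P. d e f = d f e) \<and>
     (\<forall>e\<in>E. \<forall>r\<in>E. \<forall>z\<in>P. \<forall>f\<in>P. d e f \<le> d e z + d r z + d r f)"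

definition left_conv :: "('a \<Rightarrow> 'a \<Rightarrow> real) \<Rightarrow> (nat \<Rightarrow> 'a) \<Rightarrow> 'a \<Rightarrow> bool" where
  "left_conv d x y \<longleftrightarrow> (\<lambda>n. d (x n) y) \<longlonglongrightarrow> 0"

definition right_conv :: "('a \<Rightarrow> 'a \<Rightarrow> real) \<Rightarrow> (nat \<Rightarrow> 'a) \<Rightarrow> 'a \<Rightarrow> bool" where
  "right_conv d y x \<longleftrightarrow> (\<lambda>n. d x (y n)) \<longlonglongrightarrow> 0"

definition cauchy_biseq :: "'a set \<Rightarrow> 'a set \<Rightarrow> ('a \<Rightarrow> 'a \<Rightarrow> real) \<Rightarrow> (nat \<Rightarrow> 'a) \<Rightarrow> (nat \<Rightarrow> 'a) \<Rightarrow> bool" where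
  "cauchy_biseq E P d x y \<longleftrightarrow>
     (\<forall>n. x n \<in> E) \<and> (\<forall>n. y n \<in> P) \<and>
     (\<forall>\<epsilon>>0. \<exists>N. \<forall>n\<ge>N. \<forall>m\<ge>N. d (x n) (y m) < \<epsilon>)"

definition complete_bipolar :: "'a set \<Rightarrow> 'a set \<Rightarrow> ('a \<Rightarrow> 'a \<Rightarrow> real) \<Rightarrow> bool" where
  "complete_bipolar E P d \<longleftrightarrow> bipolar_metric E P d \<and>
     (\<forall>x y. cauchy_biseq E P d x y \<longrightarrow>
        (\<exists>v\<in>P. left_conv d x v) \<and> (\<exists>u\<in>E. right_conv d y u))"

end

theory Submission
  imports Defs
begin

lemma geo_le: fixes r :: real assumes "0 \<le> r" "r < 1"
  shows "(\<Sum>k<j. r^(n+k)) \<le> r^n / (1-r)"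
proof -
  have "(\<Sum>k<j. r^(n+k)) = r^n * (\<Sum>k<j. r^k)" by (simp add: power_add sum_distrib_left)
  also have "(\<Sum>k<j. r^k) = (1 - r^j)/(1-r)" using assms sum_gp_strict[of r j] by simp
  also have "r^n * ((1 - r^j)/(1-r)) \<le> r^n * (1/(1-r))"
    using assms by (intro mult_left_mono divide_right_mono) auto
  finally show ?thesis by simp
qed

lemma cauchy_est:
  fixes d :: "'a \<Rightarrow> 'a \<Rightarrow> real"
  assumes tri: "\<And>e r z f. e\<in>E \<Longrightarrow> r\<in>E \<Longrightarrow> z\<in>P \<Longrightarrow> f\<in>P \<Longrightarrow> d e f \<le> d e z + d r z + d r f"
  and xE: "\<And>n. x n \<in> E" and yP: "\<And>n. y n \<in> P"
  and r: "0 \<le> r" "r < 1" and K: "0 \<le> K"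
  and b0: "\<And>k. d (x k) (y k) \<le> K * r^k"
  and b1: "\<And>k. d (x k) (y (Suc k)) \<le> K * r^k"
  and b2: "\<And>k. d (x (Suc k)) (y k) \<le> K * r^k"
  shows "d (x n) (y (n+j)) \<le> 3*K*r^n/(1-r) \<and> d (x (n+j)) (y n) \<le> 3*K*r^n/(1-r)"
proof -
  have A: "d (x n) (y (n+j)) \<le> K*r^n + 2*K*(\<Sum>k<j. r^(n+k))"
  proof (induction j)
    case 0 then show ?case using b0[of n] by simp
  next
    case (Suc j)
    have "d (x n) (y (n + Suc j)) \<le> d (x n) (y (n+j)) + d (x (n+j)) (y (n+j)) + d (x (n+j)) (y (Suc (n+j)))"
      using tri[OF xE xE yP yP] by simp
    also have "\<dots> \<le> K*r^n + 2*K*(\<Sum>k<j. r^(n+k)) + K*r^(n+j) + K*r^(n+j)"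
      using Suc b0[of "n+j"] b1[of "n+j"] by linarith
    finally show ?case by (simp add: algebra_simps)
  qed
  have B: "d (x (n+j)) (y n) \<le> K*r^n + 2*K*(\<Sum>k<j. r^(n+k))"
  proof (induction j)
    case 0 then show ?case using b0[of n] by simp
  next
    case (Suc j)
    have "d (x (n + Suc j)) (y n) \<le> d (x (Suc (n+j))) (y (n+j)) + d (x (n+j)) (y (n+j)) + d (x (n+j)) (y n)"
      using tri[OF xE xE yP yP] by simp
    also have "\<dots> \<le> K*r^n + 2*K*(\<Sum>k<j. r^(n+k)) + K*r^(n+j) + K*r^(n+j)"
      using Suc b0[of "n+j"] b2[of "n+j"] by linarith
    finally show ?case by (simp add: algebra_simps)
  qed
  have G: "2*K*(\<Sum>k<j. r^(n+k)) \<le> 2*K*(r^n/(1-r))"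
    using geo_le[OF r, where j=j and n=n] K by (intro mult_left_mono) auto
  have H: "K*r^n \<le> K*r^n/(1-r)"
  proof -
    have "K*r^n * 1 \<le> K*r^n * (1/(1-r))" using r K
      by (intro mult_left_mono) (auto simp: field_simps)
    then show ?thesis by simp
  qed
  have E: "3*K*r^n/(1-r) = K*r^n/(1-r) + 2*K*(r^n/(1-r))" by (simp add: field_simps)
  have "K*r^n + 2*K*(r^n/(1-r)) \<le> 3*K*r^n/(1-r)" unfolding E using H by linarith
  then show ?thesis using A B G by linarith
qed

theorem corollary3p5:
  fixes E P :: "'a set" and d :: "'a \<Rightarrow> 'a \<Rightarrow> real" and F :: "'a \<Rightarrow> 'a"
    and \<pi> :: real and \<sigma> :: nat and q :: "nat \<Rightarrow> 'a \<Rightarrow> 'a \<Rightarrow> real"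
  assumes complete: "complete_bipolar E P d"
    and FE: "F ` E \<subseteq> E" and FP: "F ` P \<subseteq> P"
    and pi: "0 < \<pi>" "\<pi> < 1"
    and sigma: "\<sigma> \<ge> 1"
    and q_nonneg: "\<forall>v\<le>\<sigma>. \<forall>e\<in>E. \<forall>f\<in>P. q v e f \<ge> 0"
    and contr: "\<forall>e\<in>E. \<forall>f\<in>P.
        (\<Sum>v=0..\<sigma>. q v (F e) (F f) * d (F e) (F f) ^ v) \<le> \<pi> * (\<Sum>v=0..\<sigma>. q v e f * d e f ^ v)"
    and q0: "\<forall>e\<in>E. \<forall>f\<in>P. q 0 e f = 0"
    and bounded: "\<forall>v\<in>{1..\<sigma>}. \<exists>W>0. \<forall>e\<in>E. \<forall>f\<in>P. q v e f \<le> W"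
    and lower: "\<exists>\<rho>\<in>{1..\<sigma>}. \<exists>Q>0. \<forall>e\<in>E. \<forall>f\<in>P. q \<rho> e f \<ge> Q"
  shows "\<exists>!g. g \<in> E \<union> P \<and> F g = g"

proof -
  have bip: "bipolar_metric E P d" using complete unfolding complete_bipolar_def by blast
  have dnn: "\<And>e f. e\<in>E \<Longrightarrow> f\<in>P \<Longrightarrow> 0 \<le> d e f" using bip unfolding bipolar_metric_def by blast
  have d0: "\<And>e f. e\<in>E \<Longrightarrow> f\<in>P \<Longrightarrow> d e f = 0 \<longleftrightarrow> e = f" using bip unfolding bipolar_metric_def by blast
  have tri: "\<And>e r z f. e\<in>E \<Longrightarrow> r\<in>E \<Longrightarrow> z\<in>P \<Longrightarrow> f\<in>P \<Longrightarrow> d e f \<le> d e z + d r z + d r f"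
    using bip unfolding bipolar_metric_def by blast
  obtain e0 f0 where e0: "e0 \<in> E" and f0: "f0 \<in> P" using bip unfolding bipolar_metric_def by blast
  obtain \<rho> Q where rho: "\<rho> \<in> {1..\<sigma>}" and Q: "Q > 0" and Qle: "\<And>e f. e\<in>E \<Longrightarrow> f\<in>P \<Longrightarrow> Q \<le> q \<rho> e f"
    using lower by blast
  have rho0: "0 < \<rho>" using rho by auto
  obtain W where W: "\<And>v e f. v\<in>{1..\<sigma>} \<Longrightarrow> e\<in>E \<Longrightarrow> f\<in>P \<Longrightarrow> q v e f \<le> W v"
    using bchoice[OF bounded] by blast
  define S where "S e f = (\<Sum>v=0..\<sigma>. q v e f * d e f ^ v)" for e f
  have S_ge: "Q * d e f ^ \<rho> \<le> S e f" if "e\<in>E" "f\<in>P" for e f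
  proof -
    have "Q * d e f ^ \<rho> \<le> q \<rho> e f * d e f ^ \<rho>"
      using Qle[OF that] dnn[OF that] by (intro mult_right_mono) auto
    also have "\<dots> \<le> S e f" unfolding S_def
      using rho q_nonneg that dnn[OF that] by (intro member_le_sum) auto
    finally show ?thesis .
  qed
  have S_nn: "0 \<le> S e f" if "e\<in>E" "f\<in>P" for e f
    using S_ge[OF that] Q dnn[OF that] by (smt (verit) zero_le_mult_iff zero_le_power)
  have S_le: "S e f \<le> (\<Sum>v=1..\<sigma>. W v * d e f ^ v)" if "e\<in>E" "f\<in>P" for e f
  proof -
    have "S e f = q 0 e f * d e f ^ 0 + (\<Sum>v=Suc 0..\<sigma>. q v e f * d e f ^ v)"
      unfolding S_def by (subst sum.atLeast_Suc_atMost) auto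
    also have "\<dots> = (\<Sum>v=1..\<sigma>. q v e f * d e f ^ v)" using q0 that by simp
    also have "\<dots> \<le> (\<Sum>v=1..\<sigma>. W v * d e f ^ v)"
      using W that dnn[OF that] by (intro sum_mono mult_right_mono) auto
    finally show ?thesis .
  qed
  have contrS: "S (F e) (F f) \<le> \<pi> * S e f" if "e\<in>E" "f\<in>P" for e f
    using contr that unfolding S_def by blast
  have itE: "(F^^n) e \<in> E" if "e \<in> E" for e n
    using that FE by (induction n) auto
  have itP: "(F^^n) f \<in> P" if "f \<in> P" for f n
    using that FP by (induction n) auto
  have itS: "S ((F^^n) e) ((F^^n) f) \<le> \<pi>^n * S e f" if "e\<in>E" "f\<in>P" for e f n
  proof (induction n)
    case 0 then show ?case by simp
  next
    case (Suc n)
    have "S ((F^^Suc n) e) ((F^^Suc n) f) \<le> \<pi> * S ((F^^n) e) ((F^^n) f)"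
      using contrS[OF itE[OF that(1)] itP[OF that(2)]] by simp
    also have "\<dots> \<le> \<pi> * (\<pi>^n * S e f)" using Suc pi by (intro mult_left_mono) auto
    finally show ?case by simp
  qed
  define r where "r = root \<rho> \<pi>"
  have r: "0 \<le> r" "r < 1" unfolding r_def using pi rho0
    by (auto simp: real_root_ge_zero)
  have dbound: "d ((F^^n) e) ((F^^n) f) \<le> root \<rho> (S e f / Q) * r^n" if "e\<in>E" "f\<in>P" for e f n
  proof -
    let ?D = "d ((F^^n) e) ((F^^n) f)"
    have Dnn: "0 \<le> ?D" using dnn itE itP that by blast
    have "Q * ?D ^ \<rho> \<le> \<pi>^n * S e f" using S_ge[OF itE[OF that(1), of n] itP[OF that(2), of n]] itS[OF that, of n] by linarith
    then have "?D ^ \<rho> \<le> S e f / Q * \<pi>^n" using Q by (simp add: field_simps)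
    then have "root \<rho> (?D ^ \<rho>) \<le> root \<rho> (S e f / Q * \<pi>^n)" using rho0 by simp
    moreover have "root \<rho> (S e f / Q * \<pi>^n) = root \<rho> (S e f / Q) * r^n"
      unfolding r_def using rho0 by (simp only: real_root_mult real_root_power)
    ultimately show ?thesis using Dnn rho0 real_root_power_cancel[OF rho0 Dnn] by simp
  qed
  define x where "x n = (F^^n) e0" for n
  define y where "y n = (F^^n) f0" for n
  have xE: "x n \<in> E" for n unfolding x_def using itE e0 by blast
  have yP: "y n \<in> P" for n unfolding y_def using itP f0 by blast
  define K where "K = max (root \<rho> (S e0 f0 / Q)) (max (root \<rho> (S e0 (F f0) / Q)) (root \<rho> (S (F e0) f0 / Q)))"
  have K: "0 \<le> K" unfolding K_def using S_nn e0 f0 Q by (auto simp: real_root_ge_zero intro: max.coboundedI1)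
  have rn: "0 \<le> r^n" for n using r by simp
  have b0: "d (x k) (y k) \<le> K * r^k" for k
    using dbound[OF e0 f0, of k] mult_right_mono[OF _ rn[of k], of "root \<rho> (S e0 f0 / Q)" K]
    unfolding x_def y_def K_def by auto
  have Ff0: "F f0 \<in> P" using FP f0 by blast
  have Fe0: "F e0 \<in> E" using FE e0 by blast
  have b1: "d (x k) (y (Suc k)) \<le> K * r^k" for k
  proof -
    have ys: "y (Suc k) = (F^^k) (F f0)" unfolding y_def by (simp add: funpow_Suc_right del: funpow.simps)
    show ?thesis
    proof -
      have "root \<rho> (S e0 (F f0) / Q) \<le> K" unfolding K_def by simp
      then show ?thesis using dbound[OF e0 Ff0, of k] mult_right_mono[OF _ rn[of k], of "root \<rho> (S e0 (F f0) / Q)" K]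
        ys unfolding x_def by simp
    qed
  qed
  have b2: "d (x (Suc k)) (y k) \<le> K * r^k" for k
  proof -
    have xs: "x (Suc k) = (F^^k) (F e0)" unfolding x_def by (simp add: funpow_Suc_right del: funpow.simps)
    show ?thesis
    proof -
      have "root \<rho> (S (F e0) f0 / Q) \<le> K" unfolding K_def by simp
      then show ?thesis using dbound[OF Fe0 f0, of k] mult_right_mono[OF _ rn[of k], of "root \<rho> (S (F e0) f0 / Q)" K]
        xs unfolding y_def by simp
    qed
  qed
  note est = cauchy_est[OF tri xE yP r K b0 b1 b2]
  have lim0: "(\<lambda>N. 3*K*r^N/(1-r)) \<longlonglongrightarrow> 0"
    using LIMSEQ_power_zero[of r] r by (auto intro!: tendsto_eq_intros)
  have cau: "cauchy_biseq E P d x y"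
    unfolding cauchy_biseq_def
  proof (intro conjI allI impI)
    fix n show "x n \<in> E" by (rule xE)
  next
    fix n show "y n \<in> P" by (rule yP)
  next
    fix \<epsilon> :: real assume "\<epsilon> > 0"
    then obtain N where N: "3*K*r^N/(1-r) < \<epsilon>"
      using order_tendstoD(2)[OF lim0] eventually_sequentially by (metis order_refl)
    have mono: "3*K*r^n/(1-r) \<le> 3*K*r^N/(1-r)" if "N \<le> n" for n
      using r K that by (intro divide_right_mono mult_left_mono power_decreasing) auto
    show "\<exists>N. \<forall>n\<ge>N. \<forall>m\<ge>N. d (x n) (y m) < \<epsilon>"
    proof (intro exI allI impI)
      fix n m assume nN: "n \<ge> N" and mN: "m \<ge> N"
      show "d (x n) (y m) < \<epsilon>"
      proof (cases "n \<le> m")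
        case True
        then obtain j where "m = n + j" using le_Suc_ex by blast
        then show ?thesis using est[of n j] mono[OF nN] N by auto
      next
        case False
        then obtain j where "n = m + j" using le_Suc_ex[of m n] by auto
        then show ?thesis using est[of m j] mono[OF mN] N by auto
      qed
    qed
  qed
  obtain v u where v: "v \<in> P" "left_conv d x v" and u: "u \<in> E" "right_conv d y u"
    using complete cau unfolding complete_bipolar_def by blast
  have xv: "(\<lambda>n. d (x n) v) \<longlonglongrightarrow> 0" using v unfolding left_conv_def by simp
  have yu: "(\<lambda>n. d u (y n)) \<longlonglongrightarrow> 0" using u unfolding right_conv_def by simp
  have xy: "(\<lambda>n. d (x n) (y n)) \<longlonglongrightarrow> 0"
  proof (rule tendsto_sandwich[of "\<lambda>_. 0" _ _ "\<lambda>n. K * r^n"])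
    show "\<forall>\<^sub>F n in sequentially. 0 \<le> d (x n) (y n)" using dnn xE yP by auto
    show "\<forall>\<^sub>F n in sequentially. d (x n) (y n) \<le> K * r^n" using b0 by auto
    show "(\<lambda>n. K * r^n) \<longlonglongrightarrow> 0" using LIMSEQ_power_zero[of r] r by (auto intro!: tendsto_eq_intros)
  qed simp
  have "d u v \<le> 0"
  proof (rule LIMSEQ_le[of "\<lambda>_. d u v" _ "\<lambda>n. d u (y n) + d (x n) (y n) + d (x n) v"])
    show "(\<lambda>n. d u (y n) + d (x n) (y n) + d (x n) v) \<longlonglongrightarrow> 0"
      using tendsto_add[OF tendsto_add[OF yu xy] xv] by simp
    show "\<exists>N. \<forall>n\<ge>N. d u v \<le> d u (y n) + d (x n) (y n) + d (x n) v"
      using tri[OF u(1) xE yP v(1)] by blast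
  qed simp
  then have uv: "u = v" using d0[OF u(1) v(1)] dnn[OF u(1) v(1)] by linarith
  define g where "g = u"
  have gE: "g \<in> E" and gP: "g \<in> P" using u v uv g_def by auto
  have FgE: "F g \<in> E" using FE gE by auto
  have yS: "y (Suc n) = F (y n)" for n unfolding y_def by simp
  have Fy: "(\<lambda>n. d (F g) (y (Suc n))) \<longlonglongrightarrow> 0"
  proof -
    have A: "(\<lambda>n. \<pi> * (\<Sum>v=1..\<sigma>. W v * d g (y n) ^ v) / Q) \<longlonglongrightarrow> \<pi> * (\<Sum>v=1..\<sigma>. W v * 0 ^ v) / Q"
      using yu Q unfolding g_def by (intro tendsto_intros) auto
    have "(\<Sum>v=1..\<sigma>. W v * (0::real) ^ v) = 0" by (intro sum.neutral) auto
    with A have A': "(\<lambda>n. \<pi> * (\<Sum>v=1..\<sigma>. W v * d g (y n) ^ v) / Q) \<longlonglongrightarrow> 0" by simp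
    have B: "(\<lambda>n. d (F g) (y (Suc n)) ^ \<rho>) \<longlonglongrightarrow> 0"
    proof (rule tendsto_sandwich[OF _ _ tendsto_const A'])
      show "\<forall>\<^sub>F n in sequentially. 0 \<le> d (F g) (y (Suc n)) ^ \<rho>" using dnn FgE yP by auto
      show "\<forall>\<^sub>F n in sequentially. d (F g) (y (Suc n)) ^ \<rho> \<le> \<pi> * (\<Sum>v=1..\<sigma>. W v * d g (y n) ^ v) / Q"
      proof (rule always_eventually, rule allI)
        fix n
        have "Q * d (F g) (F (y n)) ^ \<rho> \<le> S (F g) (F (y n))" using S_ge FgE FP yP by blast
        also have "\<dots> \<le> \<pi> * S g (y n)" using contrS gE yP by blast
        also have "\<dots> \<le> \<pi> * (\<Sum>v=1..\<sigma>. W v * d g (y n) ^ v)" using S_le gE yP pi by (intro mult_left_mono) auto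
        finally show "d (F g) (y (Suc n)) ^ \<rho> \<le> \<pi> * (\<Sum>v=1..\<sigma>. W v * d g (y n) ^ v) / Q"
          using Q yS by (simp add: field_simps)
      qed
    qed
    have "(\<lambda>n. root \<rho> (d (F g) (y (Suc n)) ^ \<rho>)) \<longlonglongrightarrow> root \<rho> 0" by (rule tendsto_real_root[OF B])
    moreover have "root \<rho> (d (F g) (y (Suc n)) ^ \<rho>) = d (F g) (y (Suc n))" for n
      using real_root_power_cancel[OF rho0 dnn[OF FgE yP]] .
    ultimately show ?thesis by simp
  qed
  have "d (F g) g \<le> 0"
  proof (rule LIMSEQ_le[of "\<lambda>_. d (F g) g" _ "\<lambda>n. d (F g) (y (Suc n)) + d (x (Suc n)) (y (Suc n)) + d (x (Suc n)) g"])
    show "(\<lambda>n. d (F g) (y (Suc n)) + d (x (Suc n)) (y (Suc n)) + d (x (Suc n)) g) \<longlonglongrightarrow> 0"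
      using tendsto_add[OF tendsto_add[OF Fy LIMSEQ_Suc[OF xy]] LIMSEQ_Suc[OF xv]] uv g_def by simp
    show "\<exists>N. \<forall>n\<ge>N. d (F g) g \<le> d (F g) (y (Suc n)) + d (x (Suc n)) (y (Suc n)) + d (x (Suc n)) g"
      using tri[OF FgE xE yP gP] by blast
  qed simp
  then have Fg: "F g = g" using d0[OF FgE gP] dnn[OF FgE gP] by linarith
  have fixeq: "e = f" if "e\<in>E" "f\<in>P" "F e = e" "F f = f" for e f
  proof -
    have "S e f \<le> \<pi> * S e f" using contrS[OF that(1,2)] that(3,4) by simp
    then have "S e f \<le> 0" using pi S_nn[OF that(1,2)] by (smt (verit) mult_le_cancel_right1)
    then have "Q * d e f ^ \<rho> \<le> 0" using S_ge[OF that(1,2)] by linarith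
    then have "d e f ^ \<rho> \<le> 0" using Q by (simp add: mult_le_0_iff)
    then have "d e f ^ \<rho> = 0" using dnn[OF that(1,2)] by (smt (verit) zero_le_power)
    then have "d e f = 0" using rho0 by simp
    then show ?thesis using d0[OF that(1,2)] by simp
  qed
  show ?thesis
  proof (rule ex1I[of _ g])
    show "g \<in> E \<union> P \<and> F g = g" using gE Fg by simp
    fix h assume h: "h \<in> E \<union> P \<and> F h = h"
    then show "h = g" using fixeq[OF _ gP _ Fg] fixeq[OF gE _ Fg] by blast
  qed
qed

end
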